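(* Let $G=(V,E)$ be a finite connected, non-complete undirected graph with $\mathrm{so}(G)=m$ and $m>0$. Let $P$ be the distribution of a random vector $\mathbf X=(X_\alpha)_{\alpha\in V}$ with values in a product space, and suppose $P$ is perfectly Markov to $G$. Then $G=G_m$, i.e. $E=E_m$, where $G_m=(V,E_m)$ is the $m$-graph of $P$.
   Context: A set $S$ separates disjoint nonempty vertex sets $A,B$ in $G$ if every path from $A$ to $B$ meets $S$. For non-adjacent distinct $\alpha,\beta$, a separator is such an $S\subseteq V\setminus\{\alpha,\beta\}$ for $A=\{\alpha\}$, $B=\{\beta\}$. We write $\mathrm{ms}_G(\alpha,\beta)$ for the set of inclusion-minimal separators. The separability order is $$\mathrm{so}(G)=\max_{\alpha\ne\beta\text{ non-adjacent}}\min\{|S|:S\in\mathrm{ms}_G(\alpha,\beta)\}$$ for non-complete $G$, and $+\infty$ for complete $G$. Write $\mathbf X_S=(X_\gamma)_{\gamma\in S}$. $P$ satisfies the global Markov property w.r.t. $G$ if, for all disjoint $A,B,S\subseteq V$ with $A,B$ nonempty, $S$ separating $A,B$ implies $\mathbf X_A\perp\!\!\!\perp\mathbf X_B\mid\mathbf X_S$. $P$ is perfectly Markov to $G$ if it satisfies the global Markov property and, for all disjoint nonempty $A,B,S\subseteq V$, $\mathbf X_A\perp\!\!\!\perp\mathbf X_B\mid\mathbf X_S$ implies that $S$ separates $A$ and $B$ in $G$. For $k\in\{0,\dots,|V|-2\}$, the $k$-graph $G_k=(V,E_k)$ has distinct $\alpha,\beta$ non-adjacent iff there exists $S\subseteq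 V\setminus\{\alpha,\beta\}$ with $|S|=k$ and $X_\alpha\perp\!\!\!\perp X_\beta\mid\mathbf X_S$. *)

theory Defs
  imports "HOL-Probability.Probability"
begin

definition graph :: "'v set \<Rightarrow> ('v \<times> 'v) set \<Rightarrow> bool" where
  "graph V E \<longleftrightarrow> finite V \<and> E \<subseteq> V \<times> V \<and> sym E \<and> (\<forall>v. (v, v) \<notin> E)"

definition walk :: "'v set \<Rightarrow> ('v \<times> 'v) set \<Rightarrow> 'v list \<Rightarrow> bool" where
  "walk V E xs \<longleftrightarrow> xs \<noteq> [] \<and> set xs \<subseteq> V \<and> (\<forall>i. Suc i < length xs \<longrightarrow> (xs ! i, xs ! Suc i) \<in> E)"

definition connected_graph :: "'v set \<Rightarrow> ('v \<times> 'v) set \<Rightarrow> bool" where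
  "connected_graph V E \<longleftrightarrow> (\<forall>a\<in>V. \<forall>b\<in>V. \<exists>xs. walk V E xs \<and> hd xs = a \<and> last xs = b)"

definition complete_graph :: "'v set \<Rightarrow> ('v \<times> 'v) set \<Rightarrow> bool" where
  "complete_graph V E \<longleftrightarrow> (\<forall>a\<in>V. \<forall>b\<in>V. a \<noteq> b \<longrightarrow> (a, b) \<in> E)"

definition separates :: "'v set \<Rightarrow> ('v \<times> 'v) set \<Rightarrow> 'v set \<Rightarrow> 'v set \<Rightarrow> 'v set \<Rightarrow> bool" where
  "separates V E A B S \<longleftrightarrow>
     (\<forall>xs. walk V E xs \<and> hd xs \<in> A \<and> last xs \<in> B \<longrightarrow> set xs \<inter> S \<noteq> {})"

definition separator :: "'v set \<Rightarrow> ('v \<times> 'v) set \<Rightarrow> 'v \<Rightarrow> 'v \<Rightarrow> 'v set \<Rightarrow> bool" where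
  "separator V E a b S \<longleftrightarrow> S \<subseteq> V - {a, b} \<and> separates V E {a} {b} S"

definition ms :: "'v set \<Rightarrow> ('v \<times> 'v) set \<Rightarrow> 'v \<Rightarrow> 'v \<Rightarrow> 'v set set" where
  "ms V E a b = {S. separator V E a b S \<and> (\<forall>T. T \<subset> S \<longrightarrow> \<not> separator V E a b T)}"

definition so :: "'v set \<Rightarrow> ('v \<times> 'v) set \<Rightarrow> enat" where
  "so V E = (if complete_graph V E then \<infinity>
     else enat (Max {Min (card ` ms V E a b) | a b. a \<in> V \<and> b \<in> V \<and> a \<noteq> b \<and> (a, b) \<notin> E}))"

definition gen_sigma :: "'a measure \<Rightarrow> ('v \<Rightarrow> 'b measure) \<Rightarrow> ('v \<Rightarrow> 'a \<Rightarrow> 'b) \<Rightarrow> 'v set \<Rightarrow> 'a measure" where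
  "gen_sigma M N X S = sigma (space M) (\<Union>i\<in>S. {X i -` A \<inter> space M | A. A \<in> sets (N i)})"

definition cond_indep :: "'a measure \<Rightarrow> ('v \<Rightarrow> 'b measure) \<Rightarrow> ('v \<Rightarrow> 'a \<Rightarrow> 'b)
    \<Rightarrow> 'v set \<Rightarrow> 'v set \<Rightarrow> 'v set \<Rightarrow> bool" where
  "cond_indep M N X A B S \<longleftrightarrow>
     (\<forall>a \<in> sets (gen_sigma M N X A). \<forall>b \<in> sets (gen_sigma M N X B).
        AE x in M. real_cond_exp M (gen_sigma M N X S) (indicator (a \<inter> b)) x
                 = real_cond_exp M (gen_sigma M N X S) (indicator a) x
                   * real_cond_exp M (gen_sigma M N X S) (indicator b) x)"

definition global_markov :: "'v set \<Rightarrow> ('v \<times> 'v) set \<Rightarrow> 'a measure \<Rightarrow> ('v \<Rightarrow> 'b measure)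
    \<Rightarrow> ('v \<Rightarrow> 'a \<Rightarrow> 'b) \<Rightarrow> bool" where
  "global_markov V E M N X \<longleftrightarrow>
     (\<forall>A B S. A \<subseteq> V \<and> B \<subseteq> V \<and> S \<subseteq> V \<and> A \<inter> B = {} \<and> A \<inter> S = {} \<and> B \<inter> S = {}
        \<and> A \<noteq> {} \<and> B \<noteq> {} \<and> separates V E A B S \<longrightarrow> cond_indep M N X A B S)"

definition perfectly_markov :: "'v set \<Rightarrow> ('v \<times> 'v) set \<Rightarrow> 'a measure \<Rightarrow> ('v \<Rightarrow> 'b measure)
    \<Rightarrow> ('v \<Rightarrow> 'a \<Rightarrow> 'b) \<Rightarrow> bool" where
  "perfectly_markov V E M N X \<longleftrightarrow> global_markov V E M N X \<and>
     (\<forall>A B S. A \<subseteq> V \<and> B \<subseteq> V \<and> S \<subseteq> V \<and> A \<inter> B = {} \<and> A \<inter> S = {} \<and> B \<inter> S = {}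
        \<and> A \<noteq> {} \<and> B \<noteq> {} \<and> S \<noteq> {} \<and> cond_indep M N X A B S \<longrightarrow> separates V E A B S)"

definition k_graph_edges :: "'v set \<Rightarrow> 'a measure \<Rightarrow> ('v \<Rightarrow> 'b measure) \<Rightarrow> ('v \<Rightarrow> 'a \<Rightarrow> 'b)
    \<Rightarrow> nat \<Rightarrow> ('v \<times> 'v) set" where
  "k_graph_edges V M N X k = {(a, b). a \<in> V \<and> b \<in> V \<and> a \<noteq> b \<and>
      \<not> (\<exists>S. S \<subseteq> V - {a, b} \<and> card S = k \<and> cond_indep M N X {a} {b} S)}"

end

theory Submission
  imports Defs
begin

lemma full_sep:
  assumes "graph V E" "a \<in> V" "b \<in> V" "a \<noteq> b" "(a, b) \<notin> E"
  shows "separator V E a b (V - {a, b})"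
  unfolding separator_def separates_def
proof (intro conjI allI impI)
  fix xs assume h: "walk V E xs \<and> hd xs \<in> {a} \<and> last xs \<in> {b}"
  show "set xs \<inter> (V - {a, b}) \<noteq> {}"
  proof
    assume c: "set xs \<inter> (V - {a, b}) = {}"
    from h have ne: "xs \<noteq> []" and sub: "set xs \<subseteq> V" by (auto simp: walk_def)
    have "length xs \<noteq> 1"
    proof
      assume "length xs = 1"
      then obtain y where "xs = [y]" by (cases xs) auto
      with h assms(4) show False by auto
    qed
    with ne have l: "Suc 0 < length xs" by (cases xs) auto
    with h have e: "(xs ! 0, xs ! 1) \<in> E" by (auto simp: walk_def)
    have x0: "xs ! 0 = a" using h ne by (simp add: hd_conv_nth)
    have "xs ! 1 \<in> set xs" using l by simp
    with c sub have "xs ! 1 \<in> {a, b}" by blast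
    moreover have "xs ! 1 \<noteq> a" using e x0 assms(1) unfolding graph_def by metis
    ultimately have "xs ! 1 = b" by blast
    with e x0 assms(5) show False by simp
  qed
qed auto

lemma ms_exists:
  assumes "finite V" "separator V E a b S0"
  shows "\<exists>S\<in>ms V E a b. card S \<le> card S0"
proof -
  define n where "n = (LEAST n. \<exists>S. separator V E a b S \<and> card S = n)"
  have ex: "\<exists>S. separator V E a b S \<and> card S = card S0" using assms(2) by blast
  have ex2: "\<exists>n. \<exists>S. separator V E a b S \<and> card S = n" using ex by blast
  have "\<exists>S. separator V E a b S \<and> card S = n" unfolding n_def using LeastI_ex[OF ex2] .
  then obtain S where S: "separator V E a b S" "card S = n" by blast
  have le: "n \<le> card S0" unfolding n_def by (rule Least_le) (use ex in blast)
  have fS: "finite S" using S(1) assms(1) unfolding separator_def by (meson finite_subset Diff_subset subset_trans)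
  have "S \<in> ms V E a b"
    unfolding ms_def
  proof (intro CollectI conjI allI impI S(1))
    fix T assume "T \<subset> S"
    then have "card T < card S" using fS by (simp add: psubset_card_mono)
    show "\<not> separator V E a b T"
    proof
      assume "separator V E a b T"
      then have "n \<le> card T" unfolding n_def by (intro Least_le) blast
      with \<open>card T < card S\<close> S(2) show False by simp
    qed
  qed
  with S le show ?thesis by auto
qed

theorem lemma5:
  fixes V :: "'v set" and E :: "('v \<times> 'v) set"
    and M :: "'a measure" and N :: "'v \<Rightarrow> 'b measure" and X :: "'v \<Rightarrow> 'a \<Rightarrow> 'b"
    and m :: nat
  assumes "graph V E"
    and "connected_graph V E"
    and "\<not> complete_graph V E"
    and "so V E = enat m"
    and "m > 0"
    and "prob_space M"
    and "\<forall>v\<in>V. X v \<in> measurable M (N v)"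
    and "perfectly_markov V E M N X"
  shows "E = k_graph_edges V M N X m"
proof -
  have gV: "finite V" "E \<subseteq> V \<times> V" "sym E" "\<And>v. (v, v) \<notin> E" using assms(1) unfolding graph_def by auto
  define F where "F = {Min (card ` ms V E a b) | a b. a \<in> V \<and> b \<in> V \<and> a \<noteq> b \<and> (a, b) \<notin> E}"
  have mF: "Max F = m" using assms(3,4) unfolding so_def F_def by simp
  have finF: "finite F"
  proof -
    have "F \<subseteq> (\<lambda>(a, b). Min (card ` ms V E a b)) ` (V \<times> V)" unfolding F_def by auto
    then show ?thesis using gV(1) by (meson finite_SigmaI finite_imageI finite_subset)
  qed
  have finms: "finite (ms V E a b)" for a b
  proof -
    have "ms V E a b \<subseteq> Pow V" unfolding ms_def separator_def by auto
    then show ?thesis using gV(1) by (meson finite_Pow_iff finite_subset)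
  qed
  have minle: "Min (card ` ms V E a b) \<le> m" if "a \<in> V" "b \<in> V" "a \<noteq> b" "(a, b) \<notin> E" for a b
  proof -
    have "Min (card ` ms V E a b) \<in> F" unfolding F_def using that by blast
    then show ?thesis using mF finF by (metis Max_ge)
  qed
  obtain a' b' where ab': "a' \<in> V" "b' \<in> V" "a' \<noteq> b'" "(a', b') \<notin> E"
    using assms(3) unfolding complete_graph_def by blast
  have Fne: "F \<noteq> {}" unfolding F_def using ab' by blast
  have "m \<in> F" using mF finF Fne Max_in by blast
  then obtain a2 b2 where ab2: "a2 \<in> V" "b2 \<in> V" "a2 \<noteq> b2" "(a2, b2) \<notin> E"
    and m2: "m = Min (card ` ms V E a2 b2)" unfolding F_def by blast
  have "ms V E a2 b2 \<noteq> {}" using ms_exists[OF gV(1) full_sep[OF assms(1) ab2]] by blast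
  then have "m \<in> card ` ms V E a2 b2" using m2 finms by (simp add: Min_in)
  then obtain S2 where S2: "S2 \<in> ms V E a2 b2" "card S2 = m" by blast
  then have "S2 \<subseteq> V - {a2, b2}" unfolding ms_def separator_def by auto
  then have "m \<le> card (V - {a2, b2})" using S2(2) gV(1) by (metis card_mono finite_Diff)
  moreover have "card (V - {a2, b2}) = card V - 2" using ab2 gV(1) by (simp add: card_Diff_subset)
  ultimately have m1: "m \<le> card V - 2" by simp
  have "card {a2, b2} \<le> card V" using ab2 gV(1) by (intro card_mono) auto
  then have c2: "2 \<le> card V" using ab2(3) by simp
  have mle: "m + 2 \<le> card V" using le_diff_conv2[OF c2, of m] m1 by blast
  have PM: "\<forall>A B S. A \<subseteq> V \<and> B \<subseteq> V \<and> S \<subseteq> V \<and> A \<inter> B = {} \<and> A \<inter> S = {} \<and> B \<inter> S = {}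
        \<and> A \<noteq> {} \<and> B \<noteq> {} \<and> S \<noteq> {} \<and> cond_indep M N X A B S \<longrightarrow> separates V E A B S"
    using assms(8) unfolding perfectly_markov_def by (rule conjunct2)
  have GM: "\<forall>A B S. A \<subseteq> V \<and> B \<subseteq> V \<and> S \<subseteq> V \<and> A \<inter> B = {} \<and> A \<inter> S = {} \<and> B \<inter> S = {}
        \<and> A \<noteq> {} \<and> B \<noteq> {} \<and> separates V E A B S \<longrightarrow> cond_indep M N X A B S"
    using assms(8) unfolding perfectly_markov_def global_markov_def by (rule conjunct1)
  show ?thesis
  proof (intro equalityI subsetI)
    fix p assume p: "p \<in> E"
    obtain a b where pab: "p = (a, b)" by fastforce
    have abV: "a \<in> V" "b \<in> V" using p pab gV(2) by auto
    have ab: "a \<noteq> b" using p pab gV(4) by auto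
    have "\<not> (\<exists>S. S \<subseteq> V - {a, b} \<and> card S = m \<and> cond_indep M N X {a} {b} S)"
    proof
      assume "\<exists>S. S \<subseteq> V - {a, b} \<and> card S = m \<and> cond_indep M N X {a} {b} S"
      then obtain S where S: "S \<subseteq> V - {a, b}" "card S = m" "cond_indep M N X {a} {b} S" by blast
      have "S \<noteq> {}" using S(2) assms(5) by auto
      then have "separates V E {a} {b} S"
        using PM[rule_format, of "{a}" "{b}" S] S abV ab by auto
      moreover have "walk V E [a, b]" using p pab abV unfolding walk_def
        by (auto simp: less_Suc_eq)
      ultimately have "set [a, b] \<inter> S \<noteq> {}" unfolding separates_def by auto
      then show False using S(1) by auto
    qed
    then show "p \<in> k_graph_edges V M N X m" unfolding k_graph_edges_def using pab abV ab by simp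
  next
    fix p assume p: "p \<in> k_graph_edges V M N X m"
    obtain a b where pab: "p = (a, b)" by fastforce
    from p pab have abV: "a \<in> V" "b \<in> V" "a \<noteq> b"
      and nS: "\<not> (\<exists>S. S \<subseteq> V - {a, b} \<and> card S = m \<and> cond_indep M N X {a} {b} S)"
      unfolding k_graph_edges_def by auto
    show "p \<in> E"
    proof (rule ccontr)
      assume "p \<notin> E"
      then have nE: "(a, b) \<notin> E" using pab by simp
      have "ms V E a b \<noteq> {}" using ms_exists[OF gV(1) full_sep[OF assms(1) abV nE]] by blast
      then have "Min (card ` ms V E a b) \<in> card ` ms V E a b" using finms by (simp add: Min_in)
      then obtain S0 where S0: "S0 \<in> ms V E a b" "card S0 \<le> m"
        using minle[OF abV nE] by auto
      have S0s: "S0 \<subseteq> V - {a, b}" "separates V E {a} {b} S0"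
        using S0(1) unfolding ms_def separator_def by auto
      have cV: "card (V - {a, b}) = card V - 2" using abV gV(1) by (simp add: card_Diff_subset)
      have fin0: "finite S0" using S0s(1) gV(1) by (meson finite_Diff finite_subset)
      have "card (V - {a, b} - S0) = card (V - {a, b}) - card S0"
        using S0s(1) fin0 by (simp add: card_Diff_subset)
      then have "m - card S0 \<le> card (V - {a, b} - S0)" using cV mle S0(2) by simp
      then obtain R where R: "R \<subseteq> V - {a, b} - S0" "card R = m - card S0"
        using obtain_subset_with_card_n by metis
      define S where "S = S0 \<union> R"
      have finR: "finite R" using R(1) gV(1) by (meson finite_Diff finite_subset)
      have cS: "card S = m" unfolding S_def using R fin0 finR S0(2)
        by (subst card_Un_disjoint) auto
      have Ssub: "S \<subseteq> V - {a, b}" unfolding S_def using R(1) S0s(1) by auto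
      have "separates V E {a} {b} S" using S0s(2) unfolding separates_def S_def by blast
      then have "cond_indep M N X {a} {b} S"
        using GM[rule_format, of "{a}" "{b}" S] Ssub abV by auto
      with nS cS Ssub show False by blast
    qed
  qed
qed

end
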